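(* Let $\mathbf X_1,\mathbf X_2,\dots$ be $\mathbb R^d$-valued random vectors, $d\ge2$, with common d.f. $F$ having continuous univariate margins $F^{[1]},\dots,F^{[d]}$ and (unique) copula $C$, with associated measure $\nu_C$ on $[0,1]^d$. Fix an integer $r\ge1$ and $\kappa>1$, let $\Pi=\{(j_1/(r+1),\dots,j_d/(r+1)):j_1,\dots,j_d\in\{1,\dots,r\}\}$, $\mathbf s=(1/(r+1),\dots,1/(r+1))$, and define $$\Pi_m=\Big\{\boldsymbol\pi\in\Pi:\nu_m((\boldsymbol\pi-\mathbf s,\boldsymbol\pi])>\tfrac{1}{\kappa(r+1)^d}\Big\},\qquad \Pi_C=\Big\{\boldsymbol\pi\in\Pi:\nu_C((\boldsymbol\pi-\mathbf s,\boldsymbol\pi])>\tfrac{1}{\kappa(r+1)^d}\Big\},$$ where $\nu_m$ is the empirical measure of the pseudo-observations $\hat{\mathbf U}_i=\frac{m}{m+1}(F_{1:m}^{[1]}(X_i^{[1]}),\dots,F_{1:m}^{[d]}(X_i^{[d]}))$, $i=1,\dots,m$. Assume that (i) $\nu_C((\boldsymbol\pi-\mathbf s,\boldsymbol\pi])\ne1/(\kappa(r+1)^d)$ for each $\boldsymbol\pi\in\Pi$, and (ii) $\sup_{\mathbf u\in[0,1]^d}|C_m(\mathbf u)-C(\mathbf u)|\to0$ almost surely as $m\to\infty$. Then, almost surely, $\Pi_m=\Pi_C$ for all $m$ sufficiently large.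
   Context: $F_{1:m}^{[\ell]}$ is the empirical d.f. of $X_1^{[\ell]},\dots,X_m^{[\ell]}$ (the $\ell$th coordinates). The empirical copula $C_m$ is the empirical d.f. of $\hat{\mathbf U}_1,\dots,\hat{\mathbf U}_m$. For $\mathbf a<\mathbf b$ in $[0,1]^d$, $(\mathbf a,\mathbf b]=\{\mathbf u\in[0,1]^d:\mathbf a<\mathbf u\le\mathbf b\}$ (componentwise inequalities). The copula $C$ satisfies $F(\mathbf x)=C(F^{[1]}(x^{[1]}),\dots,F^{[d]}(x^{[d]}))$. *)

theory Defs
  imports "HOL-Probability.Probability"
begin

text \<open>Vectors in R^d are represented as real^'d with a finite index type 'd (d = CARD('d)).
Random vectors X_1, X_2, ... are X 1, X 2, ... (index 0 unused).\<close>

definition unit_cube :: "(real^'d) set" where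
  "unit_cube = {u. \<forall>j. 0 \<le> u$j \<and> u$j \<le> 1}"

text \<open>C-volume of the box (a,b], i.e. the value of the measure with d.f. C on (a,b].\<close>
definition C_volume :: "(real^'d \<Rightarrow> real) \<Rightarrow> real^'d \<Rightarrow> real^'d \<Rightarrow> real" where
  "C_volume C a b =
     (\<Sum>S\<in>Pow (UNIV :: 'd set). (-1) ^ card S * C (\<chi> j. if j \<in> S then a$j else b$j))"

definition is_copula :: "(real^'d \<Rightarrow> real) \<Rightarrow> bool" where
  "is_copula C \<longleftrightarrow>
     (\<forall>u\<in>unit_cube. (\<exists>j. u$j = 0) \<longrightarrow> C u = 0) \<and>
     (\<forall>u\<in>unit_cube. \<forall>j. (\<forall>k. k \<noteq> j \<longrightarrow> u$k = 1) \<longrightarrow> C u = u$j) \<and>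
     (\<forall>a\<in>unit_cube. \<forall>b\<in>unit_cube. (\<forall>j. a$j \<le> b$j) \<longrightarrow> 0 \<le> C_volume C a b)"

definition emp_marg :: "(nat \<Rightarrow> 'a \<Rightarrow> real^'d) \<Rightarrow> nat \<Rightarrow> 'd \<Rightarrow> 'a \<Rightarrow> real \<Rightarrow> real" where
  "emp_marg X m l \<omega> t = real (card {k\<in>{1..m}. X k \<omega> $ l \<le> t}) / real m"

definition pseudo_obs :: "(nat \<Rightarrow> 'a \<Rightarrow> real^'d) \<Rightarrow> nat \<Rightarrow> nat \<Rightarrow> 'a \<Rightarrow> real^'d" where
  "pseudo_obs X m i \<omega> = (\<chi> l. real m / (real m + 1) * emp_marg X m l \<omega> (X i \<omega> $ l))"

definition emp_copula :: "(nat \<Rightarrow> 'a \<Rightarrow> real^'d) \<Rightarrow> nat \<Rightarrow> 'a \<Rightarrow> real^'d \<Rightarrow> real" where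
  "emp_copula X m \<omega> u =
     real (card {i\<in>{1..m}. \<forall>l. pseudo_obs X m i \<omega> $ l \<le> u$l}) / real m"

definition emp_box :: "(nat \<Rightarrow> 'a \<Rightarrow> real^'d) \<Rightarrow> nat \<Rightarrow> 'a \<Rightarrow> real^'d \<Rightarrow> real^'d \<Rightarrow> real" where
  "emp_box X m \<omega> a b =
     real (card {i\<in>{1..m}. \<forall>l. a$l < pseudo_obs X m i \<omega> $ l \<and> pseudo_obs X m i \<omega> $ l \<le> b$l})
     / real m"

definition grid :: "nat \<Rightarrow> (real^'d) set" where
  "grid r = {p. \<forall>j. \<exists>k\<in>{1..r}. p$j = real k / (real r + 1)}"

definition shift_vec :: "nat \<Rightarrow> real^'d" where
  "shift_vec r = (\<chi> j. 1 / (real r + 1))"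

definition Pi_m :: "(nat \<Rightarrow> 'a \<Rightarrow> real^'d) \<Rightarrow> nat \<Rightarrow> real \<Rightarrow> nat \<Rightarrow> 'a \<Rightarrow> (real^'d) set" where
  "Pi_m X r \<kappa> m \<omega> = {p \<in> grid r.
      emp_box X m \<omega> (p - shift_vec r) p > 1 / (\<kappa> * (real r + 1) ^ CARD('d))}"

definition Pi_C :: "(real^'d \<Rightarrow> real) \<Rightarrow> nat \<Rightarrow> real \<Rightarrow> (real^'d) set" where
  "Pi_C C r \<kappa> = {p \<in> grid r.
      C_volume C (p - shift_vec r) p > 1 / (\<kappa> * (real r + 1) ^ CARD('d))}"

end

theory Submission
  imports Defs
begin


lemma cop_mono1:
  fixes C :: "real^'d \<Rightarrow> real"
  assumes cop: "is_copula C" and u: "u \<in> unit_cube" and t: "u$j \<le> t" "t \<le> 1"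
  shows "C u \<le> C (\<chi> k. if k = j then t else u$k)"
proof -
  define a :: "real^'d" where "a = (\<chi> k. if k = j then u$j else 0)"
  define b :: "real^'d" where "b = (\<chi> k. if k = j then t else u$k)"
  have ucube: "\<And>k. 0 \<le> u$k \<and> u$k \<le> 1" using u by (auto simp: unit_cube_def)
  have acube: "a \<in> unit_cube" using ucube by (auto simp: unit_cube_def a_def)
  have t0: "0 \<le> t" using ucube[of j] t by linarith
  have bcube: "b \<in> unit_cube" using ucube t t0 by (auto simp: unit_cube_def b_def)
  have ab: "\<forall>k. a$k \<le> b$k" using ucube t by (auto simp: a_def b_def)
  have "0 \<le> C_volume C a b" using cop acube bcube ab unfolding is_copula_def by blast
  also have "C_volume C a b = (\<Sum>S\<in>{{},{j}}. (-1) ^ card S * C (\<chi> k. if k \<in> S then a$k else b$k))"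
    unfolding C_volume_def
  proof (rule sum.mono_neutral_right)
    show "finite (Pow (UNIV::'d set))" by simp
    show "{{}, {j}} \<subseteq> Pow UNIV" by auto
    show "\<forall>S\<in>Pow UNIV - {{}, {j}}. (-1) ^ card S * C (\<chi> k. if k \<in> S then a$k else b$k) = 0"
    proof
      fix S :: "'d set" assume S: "S \<in> Pow UNIV - {{}, {j}}"
      then obtain k where k: "k \<in> S" "k \<noteq> j" by auto
      have "(\<chi> k. if k \<in> S then a$k else b$k) \<in> unit_cube"
        using acube bcube by (auto simp: unit_cube_def)
      moreover have "(\<chi> k. if k \<in> S then a$k else b$k) $ k = 0" using k by (simp add: a_def)
      ultimately have "C (\<chi> k. if k \<in> S then a$k else b$k) = 0"
        using cop unfolding is_copula_def by blast
      then show "(-1) ^ card S * C (\<chi> k. if k \<in> S then a$k else b$k) = 0" by simp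
    qed
  qed
  also have "\<dots> = C b - C u"
  proof -
    have "(\<chi> k. if k \<in> {j} then a$k else b$k) = u" by (auto simp: a_def b_def vec_eq_iff)
    moreover have "(\<chi> k. if k \<in> {} then a$k else b$k) = b" by (simp add: vec_eq_iff)
    ultimately show ?thesis by simp
  qed
  finally show ?thesis by (simp add: b_def)
qed

lemma cop_le_aux:
  fixes C :: "real^'d \<Rightarrow> real"
  assumes cop: "is_copula C"
  shows "finite T \<Longrightarrow> u \<in> unit_cube \<Longrightarrow> C u \<le> C (\<chi> k. if k \<in> T then 1 else u$k)"
proof (induction T rule: finite_induct)
  case empty then show ?case by simp
next
  case (insert j T)
  define w :: "real^'d" where "w = (\<chi> k. if k \<in> T then 1 else u$k)"
  have w: "w \<in> unit_cube" using insert(4) by (auto simp: unit_cube_def w_def)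
  have "C u \<le> C w" using insert by (simp add: w_def)
  also have "\<dots> \<le> C (\<chi> k. if k = j then 1 else w$k)"
    by (rule cop_mono1[OF cop w]) (use w in \<open>auto simp: unit_cube_def\<close>)
  also have "(\<chi> k. if k = j then 1 else w$k) = (\<chi> k. if k \<in> insert j T then 1 else u$k)"
    by (auto simp: vec_eq_iff w_def)
  finally show ?case .
qed

lemma cop_bounded:
  fixes C :: "real^'d \<Rightarrow> real"
  assumes cop: "is_copula C" and u: "u \<in> unit_cube"
  shows "\<bar>C u\<bar> \<le> 1"
proof -
  have "C u \<le> C (\<chi> k. if k \<in> UNIV then 1 else u$k)" by (rule cop_le_aux[OF cop _ u]) simp
  also have "\<dots> = 1"
  proof -
    obtain j :: 'd where True by simp
    have "(\<chi> k. if k \<in> (UNIV::'d set) then 1 else u$k) \<in> unit_cube" by (simp add: unit_cube_def)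
    then show ?thesis using cop unfolding is_copula_def by auto
  qed
  finally have up: "C u \<le> 1" .
  have "0 \<le> C_volume C 0 u" using cop u unfolding is_copula_def
    by (auto simp: unit_cube_def)
  also have "C_volume C 0 u = (\<Sum>S\<in>{{}}. (-1) ^ card S * C (\<chi> k. if k \<in> S then (0::real^'d)$k else u$k))"
    unfolding C_volume_def
  proof (rule sum.mono_neutral_right)
    show "\<forall>S\<in>Pow UNIV - {{}}. (-1) ^ card S * C (\<chi> k. if k \<in> S then (0::real^'d)$k else u$k) = 0"
    proof
      fix S :: "'d set" assume S: "S \<in> Pow UNIV - {{}}"
      then obtain k where k: "k \<in> S" by auto
      have "(\<chi> k. if k \<in> S then (0::real^'d)$k else u$k) \<in> unit_cube"
        using u by (auto simp: unit_cube_def)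
      moreover have "(\<chi> k. if k \<in> S then (0::real^'d)$k else u$k) $ k = 0" using k by simp
      ultimately show "(-1) ^ card S * C (\<chi> k. if k \<in> S then (0::real^'d)$k else u$k) = 0"
        using cop unfolding is_copula_def by auto
    qed
  qed auto
  also have "\<dots> = C u" by simp
  finally show ?thesis using up by simp
qed



lemma ind_all:
  fixes P :: "'d::finite \<Rightarrow> bool"
  shows "(if \<forall>l. P l then 1 else 0 :: real) = (\<Prod>l\<in>UNIV. if P l then 1 else 0)"
proof (cases "\<forall>l. P l")
  case True then show ?thesis by simp
next
  case False
  then obtain l where "\<not> P l" by auto
  then have "(\<Prod>l\<in>UNIV. if P l then 1 else 0::real) = 0" by (intro prod_zero) auto
  with False show ?thesis by simp
qed

lemma ind_identity:
  fixes a b x :: "real^'d"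
  assumes ab: "\<forall>l. a$l \<le> b$l"
  shows "(if \<forall>l. a$l < x$l \<and> x$l \<le> b$l then 1 else 0 :: real) =
    (\<Sum>S\<in>Pow UNIV. (-1) ^ card S *
       (if \<forall>l. x$l \<le> (\<chi> k. if k \<in> S then a$k else b$k)$l then 1 else 0))"
proof -
  have "(if \<forall>l. a$l < x$l \<and> x$l \<le> b$l then 1 else 0 :: real) =
     (\<Prod>l\<in>UNIV. (- (if x$l \<le> a$l then 1 else 0)) + (if x$l \<le> b$l then 1 else 0))"
    unfolding ind_all by (intro prod.cong refl) (use ab in \<open>auto intro: order_trans\<close>)
  also have "\<dots> = (\<Sum>S\<in>Pow UNIV. (\<Prod>l\<in>S. - (if x$l \<le> a$l then 1 else 0)) *
                    (\<Prod>l\<in>UNIV - S. (if x$l \<le> b$l then 1 else 0 :: real)))"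
    by (rule prod_add) simp
  also have "\<dots> = (\<Sum>S\<in>Pow UNIV. (-1) ^ card S *
       (if \<forall>l. x$l \<le> (\<chi> k. if k \<in> S then a$k else b$k)$l then 1 else 0))"
  proof (intro sum.cong refl)
    fix S :: "'d set"
    have e1: "(\<Prod>l\<in>S. - (if x$l \<le> a$l then 1 else 0)) =
       (-1::real) ^ card S * (\<Prod>l\<in>S. (if x$l \<le> a$l then 1 else 0))"
    proof -
      have "(\<Prod>l\<in>S. - (if x$l \<le> a$l then 1 else 0)) = (\<Prod>l\<in>S. (-1::real) * (if x$l \<le> a$l then 1 else 0))"
        by simp
      then show ?thesis by (simp only: prod.distrib prod_constant)
    qed
    have e2: "(if \<forall>l. x$l \<le> (\<chi> k. if k \<in> S then a$k else b$k)$l then 1 else 0 :: real)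
      = (\<Prod>l\<in>UNIV. if l \<in> S then (if x$l \<le> a$l then 1 else 0) else (if x$l \<le> b$l then 1 else 0))"
      unfolding ind_all by (intro prod.cong refl) auto
    have e3: "\<dots> = (\<Prod>l\<in>S. (if x$l \<le> a$l then 1 else 0)) * (\<Prod>l\<in>UNIV - S. (if x$l \<le> b$l then 1 else 0 :: real))"
      by (simp add: prod.If_cases Compl_eq_Diff_UNIV)
    show "(\<Prod>l\<in>S. - (if x$l \<le> a$l then 1 else 0)) *
                    (\<Prod>l\<in>UNIV - S. (if x$l \<le> b$l then 1 else 0 :: real)) = (-1) ^ card S *
       (if \<forall>l. x$l \<le> (\<chi> k. if k \<in> S then a$k else b$k)$l then 1 else 0)"
      unfolding e1 e2 e3 by simp
  qed
  finally show ?thesis .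
qed

lemma card_sum: "finite A \<Longrightarrow> real (card {i\<in>A. P i}) = (\<Sum>i\<in>A. if P i then 1 else 0)"
  by (simp add: sum.inter_filter[symmetric])

lemma box_vol:
  fixes X :: "nat \<Rightarrow> 'a \<Rightarrow> real^'d"
  assumes ab: "\<forall>l. a$l \<le> b$l"
  shows "emp_box X m \<omega> a b = C_volume (emp_copula X m \<omega>) a b"
proof -
  let ?U = "\<lambda>i. pseudo_obs X m i \<omega>"
  have "emp_box X m \<omega> a b = (\<Sum>i\<in>{1..m}. if \<forall>l. a$l < ?U i $ l \<and> ?U i $ l \<le> b$l then 1 else 0) / real m"
    unfolding emp_box_def by (subst card_sum) simp_all
  also have "\<dots> = (\<Sum>i\<in>{1..m}. \<Sum>S\<in>Pow UNIV. (-1) ^ card S *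
       (if \<forall>l. ?U i $l \<le> (\<chi> k. if k \<in> S then a$k else b$k)$l then 1 else 0)) / real m"
    using ind_identity[OF ab] by simp
  also have "\<dots> = (\<Sum>S\<in>Pow UNIV. (-1) ^ card S * ((\<Sum>i\<in>{1..m}.
       (if \<forall>l. ?U i $l \<le> (\<chi> k. if k \<in> S then a$k else b$k)$l then 1 else 0)) / real m))"
    by (simp add: sum_divide_distrib sum_distrib_left) (rule sum.swap)
  also have "\<dots> = C_volume (emp_copula X m \<omega>) a b"
    unfolding C_volume_def emp_copula_def by (subst card_sum, simp)+ simp
  finally show ?thesis .
qed


lemma grid_finite: "finite (grid r :: (real^'d) set)"
proof -
  define A where "A = (\<lambda>k. real k / (real r + 1)) ` {1..r}"
  have "grid r \<subseteq> vec_lambda ` (Pi\<^sub>E (UNIV::'d set) (\<lambda>_. A))"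
  proof
    fix p :: "real^'d" assume "p \<in> grid r"
    then have "(\<lambda>j. p$j) \<in> Pi\<^sub>E UNIV (\<lambda>_. A)" by (auto simp: grid_def A_def)
    moreover have "p = vec_lambda (\<lambda>j. p$j)" by simp
    ultimately show "p \<in> vec_lambda ` (Pi\<^sub>E UNIV (\<lambda>_. A))" by blast
  qed
  moreover have "finite (Pi\<^sub>E (UNIV::'d set) (\<lambda>_. A))" by (intro finite_PiE) (auto simp: A_def)
  ultimately show ?thesis by (meson finite_imageI finite_subset)
qed

lemma grid_props:
  assumes p: "p \<in> grid r"
  shows "p - shift_vec r \<in> unit_cube" "p \<in> unit_cube" "\<forall>l. (p - shift_vec r)$l \<le> p$l"
proof -
  have *: "\<And>l. 1 / (real r + 1) \<le> p$l \<and> p$l \<le> real r / (real r + 1)"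
  proof -
    fix l
    from p have "\<exists>k\<in>{1..r}. p$l = real k / (real r + 1)" by (simp add: grid_def)
    then obtain k where k: "k \<in> {1..r}" "p$l = real k / (real r + 1)" by blast
    then show "1 / (real r + 1) \<le> p$l \<and> p$l \<le> real r / (real r + 1)"
      by (auto simp: divide_right_mono)
  qed
  have **: "real r / (real r + 1) \<le> 1" by simp
  show "p - shift_vec r \<in> unit_cube" "p \<in> unit_cube" "\<forall>l. (p - shift_vec r)$l \<le> p$l"
  proof -
    have pos: "0 \<le> 1 / (real r + 1)" by simp
    have c: "0 \<le> p$l - 1/(real r+1) \<and> p$l \<le> 1 \<and> 0 \<le> p$l \<and> p$l - 1/(real r+1) \<le> 1" for l
      using *[of l] ** pos by linarith
    show "p - shift_vec r \<in> unit_cube" "p \<in> unit_cube" "\<forall>l. (p - shift_vec r)$l \<le> p$l"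
      using c pos by (auto simp: unit_cube_def shift_vec_def)
  qed
qed

lemma emp_copula_bounds:
  assumes "m \<ge> 1"
  shows "0 \<le> emp_copula X m \<omega> u \<and> emp_copula X m \<omega> u \<le> 1"
proof -
  have "card {i\<in>{1..m}. \<forall>l. pseudo_obs X m i \<omega> $ l \<le> u$l} \<le> card {1..m}"
    by (intro card_mono) auto
  then show ?thesis using assms unfolding emp_copula_def by auto
qed



theorem proposition3p1:
  fixes M :: "'a measure"
    and X :: "nat \<Rightarrow> 'a \<Rightarrow> real^'d"
    and F :: "real^'d \<Rightarrow> real"
    and Fm :: "'d \<Rightarrow> real \<Rightarrow> real"
    and C :: "real^'d \<Rightarrow> real"
    and r :: nat and \<kappa> :: real
  assumes "prob_space M"
    and "CARD('d) \<ge> 2"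
    and rv: "\<And>i. i \<ge> 1 \<Longrightarrow> X i \<in> borel_measurable M"
    and df: "\<And>i x. i \<ge> 1 \<Longrightarrow>
               measure M {\<omega>\<in>space M. \<forall>j. X i \<omega> $ j \<le> x$j} = F x"
    and margins: "\<And>i l t. i \<ge> 1 \<Longrightarrow> measure M {\<omega>\<in>space M. X i \<omega> $ l \<le> t} = Fm l t"
    and cont: "\<And>l. continuous_on UNIV (Fm l)"
    and copula: "is_copula C"
    and sklar: "\<And>x. F x = C (\<chi> l. Fm l (x$l))"
    and "r \<ge> 1" and "\<kappa> > 1"
    and nontie: "\<And>p. p \<in> grid r \<Longrightarrow>
               C_volume C (p - shift_vec r) p \<noteq> 1 / (\<kappa> * (real r + 1) ^ CARD('d))"
    and unif: "AE \<omega> in M. (\<lambda>m. SUP u\<in>unit_cube. \<bar>emp_copula X m \<omega> u - C u\<bar>) \<longlonglongrightarrow> 0"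
  shows "AE \<omega> in M. eventually (\<lambda>m. Pi_m X r \<kappa> m \<omega> = Pi_C C r \<kappa>) sequentially"
  proof -
  let ?thr = "1 / (\<kappa> * (real r + 1) ^ CARD('d))"
  let ?s = "shift_vec r :: real^'d"
  let ?D = "\<lambda>\<omega> m. SUP u\<in>unit_cube. \<bar>emp_copula X m \<omega> u - C u\<bar>"
  show ?thesis using unif
  proof (rule eventually_mono)
    fix \<omega> assume D: "?D \<omega> \<longlonglongrightarrow> 0"
    have ptw: "(\<lambda>m. emp_copula X m \<omega> v) \<longlonglongrightarrow> C v" if v: "v \<in> unit_cube" for v
    proof -
      have le: "\<bar>emp_copula X m \<omega> v - C v\<bar> \<le> ?D \<omega> m" if m: "m \<ge> 1" for m
      proof (rule cSUP_upper[OF v])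
        show "bdd_above ((\<lambda>u. \<bar>emp_copula X m \<omega> u - C u\<bar>) ` unit_cube)"
        proof (rule bdd_aboveI2)
          fix u :: "real^'d" assume "u \<in> unit_cube"
          then have "\<bar>C u\<bar> \<le> 1" by (rule cop_bounded[OF copula])
          then show "\<bar>emp_copula X m \<omega> u - C u\<bar> \<le> 2"
            using emp_copula_bounds[OF m, of X \<omega> u] by linarith
        qed
      qed
      have "(\<lambda>m. \<bar>emp_copula X m \<omega> v - C v\<bar>) \<longlonglongrightarrow> 0"
      proof (rule tendsto_sandwich[OF _ _ tendsto_const D])
        show "\<forall>\<^sub>F m in sequentially. 0 \<le> \<bar>emp_copula X m \<omega> v - C v\<bar>" by simp
        show "\<forall>\<^sub>F m in sequentially. \<bar>emp_copula X m \<omega> v - C v\<bar> \<le> ?D \<omega> m"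
          using le eventually_sequentially by blast
      qed
      then show ?thesis by (simp add: tendsto_rabs_zero_iff LIM_zero_iff)
    qed
    have vol: "(\<lambda>m. C_volume (emp_copula X m \<omega>) (p - ?s) p) \<longlonglongrightarrow> C_volume C (p - ?s) p"
      if p: "p \<in> grid r" for p
      unfolding C_volume_def
    proof (intro tendsto_sum tendsto_mult tendsto_const ptw)
      fix S :: "'d set"
      show "(\<chi> j. if j \<in> S then (p - ?s)$j else p$j) \<in> unit_cube"
        using grid_props[OF p] by (auto simp: unit_cube_def)
    qed
    have ev: "\<forall>p\<in>grid r. eventually (\<lambda>m. (emp_box X m \<omega> (p - ?s) p > ?thr) = (C_volume C (p - ?s) p > ?thr)) sequentially"
    proof
      fix p :: "real^'d" assume p: "p \<in> grid r"
      have eq: "emp_box X m \<omega> (p - ?s) p = C_volume (emp_copula X m \<omega>) (p - ?s) p" for m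
        by (rule box_vol) (rule grid_props(3)[OF p])
      have vol': "(\<lambda>m. emp_box X m \<omega> (p - ?s) p) \<longlonglongrightarrow> C_volume C (p - ?s) p"
        unfolding eq by (rule vol[OF p])
      show "eventually (\<lambda>m. (emp_box X m \<omega> (p - ?s) p > ?thr) = (C_volume C (p - ?s) p > ?thr)) sequentially"
      proof (cases "C_volume C (p - ?s) p > ?thr")
        case True
        show ?thesis using order_tendstoD(1)[OF vol' True] by (rule eventually_mono) (use True in simp)
      next
        case False
        then have lt: "C_volume C (p - ?s) p < ?thr" using nontie[OF p] by linarith
        show ?thesis using order_tendstoD(2)[OF vol' lt] by (rule eventually_mono) (use False in simp)
      qed
    qed
    have "eventually (\<lambda>m. \<forall>p\<in>grid r. (emp_box X m \<omega> (p - ?s) p > ?thr) = (C_volume C (p - ?s) p > ?thr)) sequentially"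
      by (rule eventually_ball_finite[OF grid_finite ev])
    then show "eventually (\<lambda>m. Pi_m X r \<kappa> m \<omega> = Pi_C C r \<kappa>) sequentially"
      by (rule eventually_mono) (auto simp: Pi_m_def Pi_C_def)
  qed
qed

end
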